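(* Let $\lambda_y>0$ be fixed and let $\mathcal{C}\subseteq(0,\infty)$ be a convex set. For $\lambda_x\in\mathcal{C}$ define $\alpha(\lambda_x,\lambda_y)=\frac{\lambda_x}{\lambda_y}\left(1-e^{-\lambda_y}\right)$ and $\bar{p}_{\lambda_y}(\lambda_x)=1-\frac{1}{1+\alpha(\lambda_x,\lambda_y)}$. Let $U(a,b)$ be a real-valued function that is jointly concave in $(a,b)$ and nondecreasing in $a$ for every fixed $b$. Then the objective function $\lambda_x\mapsto U\big(\bar{p}_{\lambda_y}(\lambda_x),\lambda_x\big)$ of the optimization problem $\max_{\lambda_x\in\mathcal{C}} U\big(\bar{p}_{\lambda_y}(\lambda_x),\lambda_x\big)$ is concave in $\lambda_x$ on $\mathcal{C}$.
   Context: Here $\lambda_x$ is the Poisson arrival rate of "fishing tasks" and $\lambda_y$ the Poisson arrival rate of regular tasks; the optimization problem above is called OP1 in the paper, and the lemma asserts that OP1 is a concave maximization problem in $\lambda_x$. *)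

theory Defs
  imports "HOL-Analysis.Analysis"
begin

definition alpha :: "real \<Rightarrow> real \<Rightarrow> real" where
  "alpha lx ly = (lx / ly) * (1 - exp (- ly))"

definition pbar :: "real \<Rightarrow> real \<Rightarrow> real" where
  "pbar ly lx = 1 - 1 / (1 + alpha lx ly)"

end

theory Submission
  imports Defs
begin

theorem lemma1:
  fixes ly :: real and C :: "real set" and U :: "real \<Rightarrow> real \<Rightarrow> real"
  assumes "ly > 0"
    and "convex C" and "C \<subseteq> {0<..}"
    and "concave_on UNIV (\<lambda>(a, b). U a b)"
    and "\<And>b. mono (\<lambda>a. U a b)"
  shows "concave_on C (\<lambda>lx. U (pbar ly lx) lx)"
proof -
  define c where "c = (1 - exp (- ly)) / ly"
  have c0: "c > 0" using assms(1) unfolding c_def by (simp add: divide_pos_pos)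
  have pb: "pbar ly x = 1 - inverse (1 + c * x)" for x
    proof -
    have "alpha x ly = c * x" unfolding alpha_def c_def by simp
    thus ?thesis unfolding pbar_def by (simp add: inverse_eq_divide)
  qed
  have inv: "convex_on {0<..} (inverse :: real \<Rightarrow> real)"
    by (rule convex_on_inverse) auto
  show ?thesis
    unfolding concave_on_iff
  proof (intro conjI ballI allI impI)
    show "convex C" by fact
    fix x y u v :: real
    assume x: "x \<in> C" and y: "y \<in> C" and u: "u \<ge> 0" and v: "v \<ge> 0" and uv: "u + v = 1"
    have xp: "x > 0" "y > 0" using x y assms(3) by auto
    have a: "1 + c * x > 0" "1 + c * y > 0" using xp c0 by (auto intro: add_pos_pos)
    have eq: "1 + c * (u * x + v * y) = u * (1 + c * x) + v * (1 + c * y)"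
      using uv by (simp add: algebra_simps)
    have "inverse (u * (1 + c * x) + v * (1 + c * y)) \<le> u * inverse (1 + c * x) + v * inverse (1 + c * y)"
    proof -
      have uu: "u = 1 - v" using uv by simp
      have "v \<le> 1" using uv u by simp
      then show ?thesis
        using convex_onD[OF inv, of v "1 + c * x" "1 + c * y"] a v unfolding uu
        by simp
    qed
    hence pc: "pbar ly (u * x + v * y) \<ge> u * pbar ly x + v * pbar ly y"
      unfolding pb eq using uv by (simp add: algebra_simps)
    have "U (pbar ly (u *\<^sub>R x + v *\<^sub>R y)) (u *\<^sub>R x + v *\<^sub>R y)
        \<ge> U (u * pbar ly x + v * pbar ly y) (u * x + v * y)"
      using assms(5)[of "u * x + v * y"] pc by (simp add: mono_def)
    moreover have "U (u * pbar ly x + v * pbar ly y) (u * x + v * y)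
        \<ge> u * U (pbar ly x) x + v * U (pbar ly y) y"
      using assms(4) u v uv unfolding concave_on_iff
      apply (elim conjE)
      apply (drule bspec[of _ _ "(pbar ly x, x)"], simp)
      apply (drule bspec[of _ _ "(pbar ly y, y)"], simp)
      by simp
    ultimately show "U (pbar ly (u *\<^sub>R x + v *\<^sub>R y)) (u *\<^sub>R x + v *\<^sub>R y)
        \<ge> u * U (pbar ly x) x + v * U (pbar ly y) y" by linarith
  qed
qed

end
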